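(* Let $D_{2n}$ be the set of all Dyck words of length $2n$. Then $\mathrm{rpn}(D_{2n}) \geq n^{\Omega(\log n)}$.
   Context: The set $D\subseteq\{0,1\}^*$ of Dyck words is the smallest set with $\epsilon\in D$ and such that $v,w\in D$ implies $vw\in D$ and $0w1\in D$ (equivalently: words with equally many zeros and ones in which every prefix contains no more ones than zeros). $D_{2n}=D\cap\{0,1\}^{2n}$. Regular expressions are built from $\epsilon$ and letters by union and concatenation (no $\emptyset$); $\mathrm{rpn}(L)$ is the minimum number of syntax-tree nodes of an expression describing $L$. *)

theory Defs
  imports Complex_Main
begin

text \<open>Words over the alphabet {0,1} are boolean lists: False is the letter 0, True is the letter 1.\<close>

inductive_set dyck :: "bool list set" where
  eps: "[] \<in> dyck"
| conc: "v \<in> dyck \<Longrightarrow> w \<in> dyck \<Longrightarrow> v @ w \<in> dyck"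
| wrap: "w \<in> dyck \<Longrightarrow> [False] @ w @ [True] \<in> dyck"

definition dyck_len :: "nat \<Rightarrow> bool list set" where
  "dyck_len m = {w \<in> dyck. length w = m}"

datatype rexp = Eps | Sym bool | Alt rexp rexp | Cat rexp rexp

fun lang :: "rexp \<Rightarrow> bool list set" where
  "lang Eps = {[]}"
| "lang (Sym a) = {[a]}"
| "lang (Alt r s) = lang r \<union> lang s"
| "lang (Cat r s) = {u @ v | u v. u \<in> lang r \<and> v \<in> lang s}"

fun rnodes :: "rexp \<Rightarrow> nat" where
  "rnodes Eps = 1"
| "rnodes (Sym a) = 1"
| "rnodes (Alt r s) = 1 + rnodes r + rnodes s"
| "rnodes (Cat r s) = 1 + rnodes r + rnodes s"

definition rpn :: "bool list set \<Rightarrow> nat" where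
  "rpn L = (LEAST k. \<exists>r. lang r = L \<and> rnodes r = k)"

end

theory Submission
  imports Defs
begin

definition ones :: "bool list \<Rightarrow> nat" where "ones w = length (filter id w)"
definition S :: "nat \<Rightarrow> nat \<Rightarrow> bool list set" where "S m j = {w. length w = m \<and> ones w = j}"

lemma ones_simps[simp]: "ones [] = 0" "ones (True # w) = Suc (ones w)" "ones (False # w) = ones w"
  "ones (u @ v) = ones u + ones v"
  by (auto simp: ones_def)

lemma finite_S[simp]: "finite (S m j)"
proof -
  have "S m j \<subseteq> {w. set w \<subseteq> UNIV \<and> length w = m}" by (auto simp: S_def)
  moreover have "finite {w. set w \<subseteq> (UNIV::bool set) \<and> length w = m}"
    by (rule finite_lists_length_eq) simp
  ultimately show ?thesis by (rule finite_subset)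
qed

lemma S_0: "S 0 j = (if j = 0 then {[]} else {})" by (auto simp: S_def)

lemma S_Suc: "S (Suc m) j = (Cons False) ` S m j \<union> (if j = 0 then {} else (Cons True) ` S m (j-1))"
proof (intro set_eqI iffI)
  fix w assume "w \<in> S (Suc m) j"
  then obtain b u where w: "w = b # u" "length u = m" by (cases w) (auto simp: S_def)
  with \<open>w \<in> S (Suc m) j\<close> show "w \<in> (Cons False) ` S m j \<union> (if j = 0 then {} else (Cons True) ` S m (j-1))"
    by (cases b) (auto simp: S_def)
next
  fix w assume "w \<in> (Cons False) ` S m j \<union> (if j = 0 then {} else (Cons True) ` S m (j-1))"
  thus "w \<in> S (Suc m) j" by (auto simp: S_def split: if_splits)
qed

lemma card_S: "card (S m j) = m choose j"
proof (induction m arbitrary: j)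
  case 0 thus ?case by (simp add: S_0)
next
  case (Suc m)
  show ?case
  proof (cases j)
    case 0
    thus ?thesis using Suc by (simp add: S_Suc card_image)
  next
    case (Suc i)
    have "card (S (Suc m) j) = card ((Cons False) ` S m j) + card ((Cons True) ` S m i)"
      unfolding S_Suc using Suc by (subst card_Un_disjoint) auto
    also have "\<dots> = (m choose j) + (m choose i)" using Suc.IH by (simp add: card_image)
    finally show ?thesis using Suc by simp
  qed
qed

lemma central_ub: "((2*k) choose k)^2 * (3*k+1) \<le> 16^k"
proof (induction k)
  case 0 thus ?case by simp
next
  case (Suc k)
  define C where "C = (2*k) choose k"
  define X where "X = (2*Suc k) choose Suc k"
  have e1: "(2*k+2) * ((2*k+1) choose k) = X * (k+1)"
    using Suc_times_binomial_eq[of "2*k+1" k] by (simp add: X_def)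
  have e2: "(2*k+1) choose k = (2*k+1) choose (k+1)"
    using binomial_symmetric[of k "2*k+1"] by simp
  have e3: "(2*k+1) * C = ((2*k+1) choose (k+1)) * (k+1)"
    using Suc_times_binomial_eq[of "2*k" k] by (simp add: C_def)
  have aux: "\<And>A X C::nat. (2*k+2)*A = X*(k+1) \<Longrightarrow> (2*k+1)*C = A*(k+1) \<Longrightarrow> X*(k+1) = 2*(2*k+1)*C"
  proof -
    fix A X C :: nat assume a1: "(2*k+2)*A = X*(k+1)" and a2: "(2*k+1)*C = A*(k+1)"
    have "(2*A)*(k+1) = X*(k+1)" using a1 by (simp add: algebra_simps)
    hence "X = 2*A" using mult_right_cancel[of "k+1" "2*A" X] by linarith
    thus "X*(k+1) = 2*(2*k+1)*C" using a2 by simp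
  qed
  have hX: "X * (k+1) = 2*(2*k+1)*C"
    by (rule aux[OF _ e3]) (use e1 e2 in simp)
  have gen: "\<And>X C::nat. X * (k+1) = 2*(2*k+1)*C \<Longrightarrow> X^2 * (3*k+4) * (k+1)^2 = 4 * (2*k+1)^2 * (3*k+4) * C^2"
  proof -
    fix X C :: nat assume "X * (k+1) = 2*(2*k+1)*C"
    hence "(X * (k+1))^2 = (2*(2*k+1)*C)^2" by simp
    hence h: "X^2 * (k+1)^2 = 2^2 * (2*k+1)^2 * C^2" by (simp only: power_mult_distrib)
    have "X^2 * (3*k+4) * (k+1)^2 = (X^2 * (k+1)^2) * (3*k+4)" by (simp only: mult_ac)
    also have "\<dots> = (2^2 * (2*k+1)^2 * C^2) * (3*k+4)" by (simp only: h)
    also have "\<dots> = 4 * (2*k+1)^2 * (3*k+4) * C^2" by (simp add: mult_ac)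
    finally show "X^2 * (3*k+4) * (k+1)^2 = 4 * (2*k+1)^2 * (3*k+4) * C^2" .
  qed
  have "X^2 * (3*k+4) * (k+1)^2 = 4 * (2*k+1)^2 * (3*k+4) * C^2"
    by (rule gen[OF hX])
  also have "\<dots> = 4 * ((2*k+1)^2 * (3*k+4)) * C^2" by (simp only: mult_ac)
  also have "\<dots> \<le> 4 * (4 * (k+1)^2 * (3*k+1)) * C^2"
  proof -
    have "(2*k+1)^2 * (3*k+4) \<le> 4 * (k+1)^2 * (3*k+1)" by (simp add: power2_eq_square algebra_simps)
    thus ?thesis by (intro mult_le_mono1 mult_le_mono2)
  qed
  also have "\<dots> = 16 * (k+1)^2 * (3*k+1) * C^2" by (simp add: mult_ac)
  also have "\<dots> = 16 * (k+1)^2 * (C^2 * (3*k+1))" by (simp only: mult_ac)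
  also have "\<dots> \<le> 16 * (k+1)^2 * 16^k" using Suc.IH unfolding C_def by (rule mult_le_mono2)
  finally have "X^2 * (3*k+4) * (k+1)^2 \<le> 16^(Suc k) * (k+1)^2" by (simp add: algebra_simps)
  hence "X^2 * (3*k+4) \<le> 16^(Suc k)" by simp
  moreover have eq: "3 * Suc k + 1 = 3*k+4" by simp
  ultimately show ?case unfolding X_def eq by simp
qed

lemma binom_sq_bound: "(m choose j)^2 * m \<le> 4^m"
proof (cases "even m")
  case True
  then obtain k where m: "m = 2*k" by blast
  have "m choose j \<le> m choose k" using binomial_maximum[of m j] m by simp
  hence "(m choose j)^2 * m \<le> (m choose k)^2 * (3*k+1)"
    using m by (intro mult_le_mono power_mono) auto
  also have "\<dots> \<le> 16^k" using central_ub[of k] m by simp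
  also have "\<dots> = 4^m" by (simp add: m power_mult)
  finally show ?thesis .
next
  case False
  then obtain k where m: "m = 2*k+1" using oddE by blast
  define Y where "Y = (2*k+1) choose k"
  define X where "X = (2*Suc k) choose Suc k"
  have e1: "(2*k+2) * Y = X * (k+1)"
    using Suc_times_binomial_eq[of "2*k+1" k] by (simp add: X_def Y_def)
  have "(2*Y)*(k+1) = X*(k+1)" using e1 by (simp add: algebra_simps)
  hence XY: "X = 2*Y" using mult_right_cancel[of "k+1" "2*Y" X] by linarith
  have "m choose j \<le> Y" using binomial_maximum[of m j] m by (simp add: Y_def)
  hence "(m choose j)^2 * m \<le> Y^2 * (3*k+4)"
    using m by (intro mult_le_mono power_mono) auto
  also have "4 * (Y^2 * (3*k+4)) = X^2 * (3*Suc k + 1)" by (simp add: XY power_mult_distrib)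
  hence "4 * (Y^2 * (3*k+4)) \<le> 16 ^ Suc k" using central_ub[of "Suc k"] by (simp add: X_def)
  hence "Y^2 * (3*k+4) \<le> 4^m" by (simp add: m power_mult)
  finally show ?thesis .
qed

lemma binom_real_bound: "real (m choose j) * sqrt (real m) \<le> 2^m"
proof -
  have h: "real ((m choose j)^2 * m) \<le> real (4^m)" using binom_sq_bound by (subst of_nat_le_iff)
  have "(real (m choose j) * sqrt (real m))^2 = real ((m choose j)^2 * m)"
    by (simp add: power_mult_distrib)
  also have "\<dots> \<le> 4^m" using h by simp
  also have "(4::real)^m = (2^m)^2" by (simp add: power_mult_distrib[symmetric] power2_eq_square)
  finally show ?thesis by (rule power2_le_imp_le) simp
qed

fun len :: "rexp \<Rightarrow> nat" where
  "len Eps = 0" | "len (Sym a) = 1" | "len (Alt r s) = len r" | "len (Cat r s) = len r + len s"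

fun hom :: "rexp \<Rightarrow> bool" where
  "hom Eps = True" | "hom (Sym a) = True" | "hom (Alt r s) = (hom r \<and> hom s \<and> len r = len s)"
| "hom (Cat r s) = (hom r \<and> hom s)"

lemma cat_mem: "u \<in> lang a \<Longrightarrow> v \<in> lang b \<Longrightarrow> u @ v \<in> lang (Cat a b)"
  by auto

lemma lang_ne: "lang r \<noteq> {}"
  by (induction r) auto

lemma hom_len: "hom r \<Longrightarrow> w \<in> lang r \<Longrightarrow> length w = len r"
  by (induction r arbitrary: w) auto

lemma all_len_hom: "(\<forall>w\<in>lang r. length w = m) \<Longrightarrow> hom r \<and> len r = m"
proof (induction r arbitrary: m)
  case Eps thus ?case by simp
next
  case (Sym a) thus ?case by simp
next
  case (Alt r s)
  obtain u where u: "u \<in> lang r" using lang_ne by blast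
  obtain v where v: "v \<in> lang s" using lang_ne by blast
  have "hom r \<and> len r = m" using Alt.IH(1)[of m] Alt.prems by auto
  moreover have "hom s \<and> len s = m" using Alt.IH(2)[of m] Alt.prems by auto
  ultimately show ?case by simp
next
  case (Cat r s)
  obtain u0 where u0: "u0 \<in> lang r" using lang_ne by blast
  obtain v0 where v0: "v0 \<in> lang s" using lang_ne by blast
  have "\<forall>u\<in>lang r. length u = m - length v0"
  proof
    fix u assume "u \<in> lang r"
    hence "u @ v0 \<in> lang (Cat r s)" using v0 by auto
    hence "length (u @ v0) = m" using Cat.prems by blast
    thus "length u = m - length v0" by simp
  qed
  hence 1: "hom r \<and> len r = m - length v0" using Cat.IH(1) by blast
  have "\<forall>v\<in>lang s. length v = m - length u0"
  proof
    fix v assume "v \<in> lang s"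
    hence "u0 @ v \<in> lang (Cat r s)" using u0 by auto
    hence "length (u0 @ v) = m" using Cat.prems by blast
    thus "length v = m - length u0" by simp
  qed
  hence 2: "hom s \<and> len s = m - length u0" using Cat.IH(2) by blast
  have "u0 @ v0 \<in> lang (Cat r s)" using u0 v0 by auto
  hence "length (u0 @ v0) = m" using Cat.prems by blast
  thus ?case using 1 2 by simp
qed

fun ch :: "nat \<Rightarrow> rexp \<Rightarrow> (rexp \<times> nat) list" where
  "ch t Eps = [(Eps,0)]"
| "ch t (Sym a) = [(Sym a,0)]"
| "ch t (Alt a b) = (if len (Alt a b) \<le> t then [(Alt a b,0)] else ch t a @ ch t b)"
| "ch t (Cat a b) = (if len (Cat a b) \<le> t then [(Cat a b,0)]
     else if len b \<le> len a then ch t a else map (\<lambda>(G,p). (G, p + len a)) (ch t b))"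

lemma ch_small: "len r \<le> t \<Longrightarrow> ch t r = [(r,0)]"
  by (cases r) auto

lemma ch_P1: "(G,p) \<in> set (ch t r) \<Longrightarrow> hom r \<Longrightarrow> hom G \<and> p + len G \<le> len r"
proof (induction t r arbitrary: G p rule: ch.induct)
  case (3 t a b) thus ?case by (auto split: if_splits)
next
  case (4 t a b)
  show ?case
  proof (cases "len (Cat a b) \<le> t")
    case True thus ?thesis using 4 by auto
  next
    case False
    show ?thesis
    proof (cases "len b \<le> len a")
      case True
      hence "(G,p) \<in> set (ch t a)" using 4 False by simp
      thus ?thesis using 4(1)[OF False True] 4(4) by fastforce
    next
      case nt: False
      then obtain p' where mem: "(G,p') \<in> set (ch t b)" and pp: "p = p' + len a" using 4 False by auto
      thus ?thesis using 4(2)[OF False nt mem] 4(4) by auto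
    qed
  qed
qed auto

lemma ch_P2: "(G,p) \<in> set (ch t r) \<Longrightarrow> 1 \<le> t \<Longrightarrow> len G \<le> t"
proof (induction t r arbitrary: G p rule: ch.induct)
  case (3 t a b)
  show ?case
  proof (cases "len (Alt a b) \<le> t")
    case True thus ?thesis using 3(3) by simp
  next
    case False
    hence "(G,p) \<in> set (ch t a) \<or> (G,p) \<in> set (ch t b)" using 3(3) by simp
    thus ?thesis using 3(1)[OF False] 3(2)[OF False] 3(4) by blast
  qed
next
  case (4 t a b)
  show ?case
  proof (cases "len (Cat a b) \<le> t")
    case True thus ?thesis using 4(3) by simp
  next
    case False
    show ?thesis
    proof (cases "len b \<le> len a")
      case True
      hence "(G,p) \<in> set (ch t a)" using 4(3) False by simp
      thus ?thesis using 4(1)[OF False True] 4(4) by blast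
    next
      case nt: False
      then obtain p' where mem: "(G,p') \<in> set (ch t b)" using 4(3) False by auto
      thus ?thesis using 4(2)[OF False nt mem] 4(4) by blast
    qed
  qed
qed simp_all

lemma ch_P3: "(G,p) \<in> set (ch t r) \<Longrightarrow> hom r \<Longrightarrow> t < len r \<Longrightarrow> t < 2 * len G"
proof (induction t r arbitrary: G p rule: ch.induct)
  case (1 t) thus ?case by simp
next
  case (2 t a) thus ?case by simp
next
  case (3 t a b)
  have F: "\<not> len (Alt a b) \<le> t" using 3(5) by simp
  hence "(G,p) \<in> set (ch t a) \<or> (G,p) \<in> set (ch t b)" using 3(3) by simp
  thus ?case
  proof
    assume "(G,p) \<in> set (ch t a)"
    thus ?thesis using 3(1)[OF F] 3(4,5) by simp
  next
    assume "(G,p) \<in> set (ch t b)"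
    thus ?thesis using 3(2)[OF F] 3(4,5) by simp
  qed
next
  case (4 t a b)
  have F: "\<not> len (Cat a b) \<le> t" using 4(5) by simp
  show ?case
  proof (cases "len b \<le> len a")
    case True
    hence mem: "(G,p) \<in> set (ch t a)" using 4(3) F by simp
    show ?thesis
    proof (cases "len a \<le> t")
      case True
      hence "G = a" using mem ch_small[of a t] by simp
      thus ?thesis using 4(5) \<open>len b \<le> len a\<close> by simp
    next
      case False
      have "hom a" using 4(4) by simp
      thus ?thesis using 4(1)[OF F \<open>len b \<le> len a\<close> mem] False by simp
    qed
  next
    case nt: False
    then obtain p' where mem: "(G,p') \<in> set (ch t b)" using 4(3) F by auto
    show ?thesis
    proof (cases "len b \<le> t")
      case True
      hence "G = b" using mem ch_small[of b t] by simp
      thus ?thesis using 4(5) nt by simp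
    next
      case False
      have "hom b" using 4(4) by simp
      thus ?thesis using 4(2)[OF F nt mem] False by simp
    qed
  qed
qed

lemma ch_sum: "(\<Sum>x\<leftarrow>ch t r. rnodes (fst x)) \<le> rnodes r"
proof (induction t r rule: ch.induct)
  case (3 t a b) thus ?case by auto
next
  case (4 t a b)
  have "(\<Sum>x\<leftarrow>map (\<lambda>(G,p). (G, p + len a)) (ch t b). rnodes (fst x)) = (\<Sum>x\<leftarrow>ch t b. rnodes (fst x))"
    by (simp add: case_prod_beta comp_def)
  thus ?case using 4 by auto
qed auto

lemma ch_cover: "hom r \<Longrightarrow> w \<in> lang r \<Longrightarrow> \<exists>(G,p)\<in>set (ch t r). take (len G) (drop p w) \<in> lang G"
proof (induction t r arbitrary: w rule: ch.induct)
  case (1 t) thus ?case by simp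
next
  case (2 t a) thus ?case by simp
next
  case (3 t a b)
  show ?case
  proof (cases "len (Alt a b) \<le> t")
    case True thus ?thesis using 3 hom_len[OF 3(3,4)] by auto
  next
    case False
    have "w \<in> lang a \<or> w \<in> lang b" using 3(4) by simp
    thus ?thesis
    proof
      assume "w \<in> lang a"
      hence "\<exists>x\<in>set (ch t a). case x of (G,p) \<Rightarrow> take (len G) (drop p w) \<in> lang G"
        using 3(1)[OF False] 3(3) by simp
      thus ?thesis using False by auto
    next
      assume "w \<in> lang b"
      hence "\<exists>x\<in>set (ch t b). case x of (G,p) \<Rightarrow> take (len G) (drop p w) \<in> lang G"
        using 3(2)[OF False] 3(3) by simp
      thus ?thesis using False by auto
    qed
  qed
next
  case (4 t a b)
  show ?case
  proof (cases "len (Cat a b) \<le> t")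
    case True thus ?thesis using 4 hom_len[OF 4(3,4)] by auto
  next
    case False
    from 4(4) obtain u v where w: "w = u @ v" "u \<in> lang a" "v \<in> lang b" by auto
    have lu: "length u = len a" using hom_len w 4(3) by auto
    show ?thesis
    proof (cases "len b \<le> len a")
      case True
      obtain G p where Gp: "(G,p) \<in> set (ch t a)" "take (len G) (drop p u) \<in> lang G"
        using 4(1)[OF False True] 4(3) w by fastforce
      have "p + len G \<le> len a" using ch_P1[OF Gp(1)] 4(3) by simp
      hence "take (len G) (drop p w) = take (len G) (drop p u)" using w lu by simp
      hence "\<exists>x\<in>set (ch t a). case x of (G, p) \<Rightarrow> take (len G) (drop p w) \<in> lang G"
        using Gp by (intro bexI[of _ "(G,p)"]) auto
      thus ?thesis using False True by simp
    next
      case nt: False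
      obtain G p where Gp: "(G,p) \<in> set (ch t b)" "take (len G) (drop p v) \<in> lang G"
        using 4(2)[OF False nt] 4(3) w by fastforce
      have "drop (p + len a) w = drop p v" using w lu by simp
      thus ?thesis using Gp False nt by force
    qed
  qed
qed

lemma ch_ctx: "hom r \<Longrightarrow> (G,p) \<in> set (ch t r) \<Longrightarrow> \<exists>x y. length x = p \<and> (\<forall>v\<in>lang G. x @ v @ y \<in> lang r)"
proof (induction t r arbitrary: G p rule: ch.induct)
  case (1 t) thus ?case by (intro exI[of _ "[]"]) auto
next
  case (2 t a) thus ?case by (intro exI[of _ "[]"]) auto
next
  case (3 t a b)
  show ?case
  proof (cases "len (Alt a b) \<le> t")
    case True thus ?thesis using 3 by (intro exI[of _ "[]"]) auto
  next
    case False
    hence "(G,p) \<in> set (ch t a) \<or> (G,p) \<in> set (ch t b)" using 3 by simp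
    thus ?thesis using 3(1)[OF False] 3(2)[OF False] 3(3) by fastforce
  qed
next
  case (4 t a b)
  show ?case
  proof (cases "len (Cat a b) \<le> t")
    case True thus ?thesis using 4 by (intro exI[of _ "[]"]) auto
  next
    case False
    show ?thesis
    proof (cases "len b \<le> len a")
      case True
      hence mem: "(G,p) \<in> set (ch t a)" using 4 False by simp
      obtain x y where xy: "length x = p" "\<forall>v\<in>lang G. x @ v @ y \<in> lang a"
        using 4(1)[OF False True _ mem] 4(3) by auto
      obtain v0 where v0: "v0 \<in> lang b" using lang_ne by blast
      have "\<forall>v\<in>lang G. x @ v @ (y @ v0) \<in> lang (Cat a b)"
      proof
        fix v assume "v \<in> lang G"
        hence "x @ v @ y \<in> lang a" using xy by blast
        hence "(x @ v @ y) @ v0 \<in> lang (Cat a b)" using v0 by (rule cat_mem)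
        thus "x @ v @ (y @ v0) \<in> lang (Cat a b)" by simp
      qed
      thus ?thesis using xy by blast
    next
      case nt: False
      then obtain p' where mem: "(G,p') \<in> set (ch t b)" and pp: "p = p' + len a" using 4 False by auto
      obtain x y where xy: "length x = p'" "\<forall>v\<in>lang G. x @ v @ y \<in> lang b"
        using 4(2)[OF False nt _ mem] 4(3) by auto
      obtain u0 where u0: "u0 \<in> lang a" using lang_ne by blast
      have lu: "length u0 = len a" using hom_len u0 4(3) by auto
      have "\<forall>v\<in>lang G. (u0 @ x) @ v @ y \<in> lang (Cat a b)"
      proof
        fix v assume "v \<in> lang G"
        hence "x @ v @ y \<in> lang b" using xy by blast
        hence "u0 @ (x @ v @ y) \<in> lang (Cat a b)" by (rule cat_mem[OF u0])
        thus "(u0 @ x) @ v @ y \<in> lang (Cat a b)" by simp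
      qed
      moreover have "length (u0 @ x) = p" using xy lu pp by simp
      ultimately show ?thesis by blast
    qed
  qed
qed

lemma decomp3: "p + g \<le> length w \<Longrightarrow> take p w @ take g (drop p w) @ drop (p+g) w = w"
  by (metis append_take_drop_id drop_drop add.commute)

lemma cov_card:
  assumes A: "A \<subseteq> S g kA" and pg: "p + g \<le> l"
  shows "card {w \<in> S l k. take g (drop p w) \<in> A} \<le> card A * ((l - g) choose (k - kA))"
proof -
  let ?C = "{w \<in> S l k. take g (drop p w) \<in> A}"
  define f where "f w = (take g (drop p w), take p w @ drop (p+g) w)" for w :: "bool list"
  have fin: "finite A" using A finite_subset finite_S by blast
  have img: "f ` ?C \<subseteq> A \<times> S (l - g) (k - kA)"
  proof
    fix z assume "z \<in> f ` ?C"
    then obtain w where w: "w \<in> ?C" "z = f w" by blast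
    have lw: "length w = l" and ow: "ones w = k" using w by (auto simp: S_def)
    have mid: "take g (drop p w) \<in> A" using w by simp
    hence om: "ones (take g (drop p w)) = kA" using A by (auto simp: S_def)
    have "ones w = ones (take p w) + ones (take g (drop p w)) + ones (drop (p+g) w)"
      using decomp3[of p g w] pg lw by (metis ones_simps(4) add.assoc)
    hence "ones (take p w @ drop (p+g) w) = k - kA" using om ow by simp
    moreover have "length (take p w @ drop (p+g) w) = l - g" using lw pg by simp
    ultimately show "z \<in> A \<times> S (l - g) (k - kA)" using w mid by (auto simp: S_def f_def)
  qed
  have inj: "inj_on f ?C"
  proof
    fix w1 w2 assume w1: "w1 \<in> ?C" and w2: "w2 \<in> ?C" and e: "f w1 = f w2"
    have l1: "length w1 = l" and l2: "length w2 = l" using w1 w2 by (auto simp: S_def)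
    have m: "take g (drop p w1) = take g (drop p w2)" using e by (simp add: f_def)
    have r: "take p w1 @ drop (p+g) w1 = take p w2 @ drop (p+g) w2" using e by (simp add: f_def)
    have "take p w1 = take p w2" using r l1 l2 pg by (metis append_eq_append_conv length_take min_absorb2 le_add1 order_trans)
    moreover have "drop (p+g) w1 = drop (p+g) w2" using r calculation by simp
    ultimately show "w1 = w2" using m decomp3[of p g w1] decomp3[of p g w2] l1 l2 pg by metis
  qed
  have "card ?C \<le> card (A \<times> S (l - g) (k - kA))"
    by (rule card_inj_on_le[OF inj img]) (simp add: fin)
  thus ?thesis by (simp add: card_cartesian_product card_S)
qed

lemma card_UN_list: "(\<And>x. x \<in> set xs \<Longrightarrow> finite (F x)) \<Longrightarrow> card (\<Union>x\<in>set xs. F x) \<le> (\<Sum>x\<leftarrow>xs. card (F x))"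
proof (induction xs)
  case Nil thus ?case by simp
next
  case (Cons a xs)
  have "card (\<Union>x\<in>set (a # xs). F x) \<le> card (F a) + card (\<Union>x\<in>set xs. F x)"
    by (simp add: card_Un_le)
  thus ?case using Cons by simp
qed

definition gf :: "nat \<Rightarrow> real" where
  "gf l = exp ((ln (real l))^2/16 - (ln 8)^2/16)"

lemma gf_pos: "gf l > 0" by (simp add: gf_def)

lemma gf_small: assumes "l < 8" shows "gf l \<le> 1"
proof (cases "l = 0")
  case True thus ?thesis by (simp add: gf_def)
next
  case False
  have "0 \<le> ln (real l)" using False by simp
  moreover have "ln (real l) \<le> ln 8" using False assms by simp
  ultimately have "(ln (real l))^2 \<le> (ln 8)^2" by (intro power_mono) auto
  thus ?thesis by (simp add: gf_def)
qed

lemma gf_step: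
  assumes l8: "8 \<le> l" and lg: "l \<le> 4 * g" and lm: "l \<le> 2 * m"
  shows "gf l \<le> sqrt (real m) * gf g"
proof -
  define a where "a = ln (real l)"
  define b where "b = ln (real g)"
  have g2: "real g \<ge> 2" using l8 lg by simp
  have m4: "real m \<ge> 4" using l8 lm by simp
  have l2: "ln (2::real) > 0" "ln (2::real) < 1" using ln_2_less_1 by auto
  have ln8: "ln (8::real) = 3 * ln 2"
    using ln_realpow[of 2 3] by simp
  have ln4: "ln (4::real) = 2 * ln 2"
    using ln_realpow[of 2 2] by simp
  have a8: "a \<ge> 3 * ln 2" unfolding a_def using l8 ln8 by (metis ln_le_cancel_iff of_nat_le_iff of_nat_numeral zero_less_numeral order_less_le_trans)
  have a0: "a \<ge> 0" using a8 l2(1) by linarith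
  have b0: "b \<ge> 0" unfolding b_def using g2 by simp
  have ab: "a \<le> b + 2 * ln 2"
  proof -
    have "real l \<le> 4 * real g" using lg by simp
    hence "ln (real l) \<le> ln (4 * real g)" using l8 by simp
    also have "\<dots> = ln 4 + ln (real g)" using g2 by (simp add: ln_mult)
    finally show ?thesis unfolding a_def b_def using ln4 by simp
  qed
  have lmm: "ln (real m) \<ge> a - ln 2"
  proof -
    have "real l \<le> 2 * real m" using lm by simp
    hence "ln (real l) \<le> ln (2 * real m)" using l8 by simp
    also have "\<dots> = ln 2 + ln (real m)" using m4 by (simp add: ln_mult)
    finally show ?thesis unfolding a_def by simp
  qed
  have key: "a^2/16 - b^2/16 \<le> ln (real m) / 2"
  proof (cases "a \<le> b")
    case True
    have "a^2 \<le> b^2" using True a0 by (intro power_mono) auto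
    moreover have "ln (real m) \<ge> 0" using m4 by simp
    ultimately show ?thesis by simp
  next
    case False
    have "a^2 - b^2 = (a - b) * (a + b)" by (simp add: power2_eq_square algebra_simps)
    also have "\<dots> \<le> (2 * ln 2) * (2 * a)"
      using False ab b0 by (intro mult_mono) auto
    finally have "a^2 - b^2 \<le> 4 * ln 2 * a" by simp
    moreover have "4 * ln 2 * a \<le> 8 * (a - ln 2)"
    proof -
      have "ln 2 * a \<le> 1 * a" using l2 a0 by (intro mult_right_mono) auto
      moreover have "4 * ln 2 * a = 4 * (ln 2 * a)" by simp
      ultimately show ?thesis using a8 l2 by argo
    qed
    ultimately have "a^2 - b^2 \<le> 8 * ln (real m)" using lmm by argo
    thus ?thesis by linarith
  qed
  have "gf l = exp (a^2/16 - (ln 8)^2/16)" by (simp add: gf_def a_def)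
  also have "\<dots> \<le> exp (ln (real m) / 2 + (b^2/16 - (ln 8)^2/16))" using key by simp
  also have "\<dots> = exp (ln (real m) / 2) * gf g" by (simp add: gf_def b_def exp_add)
  also have "exp (ln (real m) / 2) = sqrt (real m)"
  proof -
    have "sqrt (real m) = real m powr (1/2)" using m4 by (simp add: powr_half_sqrt)
    also have "\<dots> = exp (ln (real m) / 2)" using m4 by (simp add: powr_def)
    finally show ?thesis by simp
  qed
  finally show ?thesis .
qed

lemma rnodes_pos: "rnodes r \<ge> 1" by (cases r) auto

lemma sl_mult: "(\<Sum>x\<leftarrow>xs. f x * (c::real)) = (\<Sum>x\<leftarrow>xs. f x) * c"
  by (induction xs) (auto simp: algebra_simps)

lemma sl_real: "(\<Sum>x\<leftarrow>xs. real (f x)) = real (\<Sum>x\<leftarrow>xs. f x)"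
  by (induction xs) auto

lemma main:
  "hom r \<Longrightarrow> lang r \<subseteq> S (len r) k \<Longrightarrow> real (card (lang r)) * gf (len r) \<le> real (rnodes r) * 2 ^ len r"
proof (induction "len r" arbitrary: r k rule: less_induct)
  case less
  define l where "l = len r"
  have fin: "finite (lang r)" using less.prems(2) finite_subset finite_S by blast
  show ?case
  proof (cases "l < 8")
    case True
    have "card (lang r) \<le> card (S l k)" using less.prems(2) by (intro card_mono) (auto simp: l_def)
    also have "\<dots> = l choose k" by (rule card_S)
    also have "\<dots> \<le> 2^l" by (rule binomial_le_pow2)
    finally have "real (card (lang r)) \<le> real (2^l)" by (subst of_nat_le_iff)
    hence c: "real (card (lang r)) \<le> 2^l" by simp
    have "real (card (lang r)) * gf l \<le> 2^l * 1" using c gf_small[OF True] gf_pos[of l] by (intro mult_mono) auto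
    also have "\<dots> \<le> real (rnodes r) * 2^l" using rnodes_pos[of r] by simp
    finally show ?thesis by (simp add: l_def)
  next
    case False
    define t where "t = l div 2"
    define cs where "cs = ch t r"
    have t1: "1 \<le> t" using False by (simp add: t_def)
    have tl: "t < l" using False by (simp add: t_def)
    define Cov where "Cov x = {w \<in> S l k. take (len (fst x)) (drop (snd x) w) \<in> lang (fst x)}" for x
    have finC: "finite (Cov x)" for x unfolding Cov_def by simp
    have cover: "lang r \<subseteq> (\<Union>x\<in>set cs. Cov x)"
    proof
      fix w assume w: "w \<in> lang r"
      obtain G p where Gp: "(G,p) \<in> set cs" "take (len G) (drop p w) \<in> lang G"
        using ch_cover[OF less.prems(1) w, of t] unfolding cs_def by blast
      have "w \<in> S l k" using w less.prems(2) l_def by auto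
      hence "w \<in> Cov (G,p)" using Gp by (simp add: Cov_def)
      thus "w \<in> (\<Union>x\<in>set cs. Cov x)" using Gp(1) by blast
    qed
    have trm: "real (card (Cov x)) * gf l \<le> real (rnodes (fst x)) * 2^l" if x: "x \<in> set cs" for x
    proof -
      obtain G p where xe: "x = (G,p)" by (cases x)
      have mem: "(G,p) \<in> set (ch t r)" using x xe cs_def by simp
      have hG: "hom G" and pl: "p + len G \<le> l" using ch_P1[OF mem less.prems(1)] l_def by auto
      have Gt: "len G \<le> t" using ch_P2[OF mem t1] .
      have tG: "t < 2 * len G" using ch_P3[OF mem less.prems(1)] tl l_def by simp
      obtain x0 y0 where ctx: "length x0 = p" "\<forall>v\<in>lang G. x0 @ v @ y0 \<in> lang r"
        using ch_ctx[OF less.prems(1) mem] by blast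
      define kG where "kG = k - ones x0 - ones y0"
      have LG: "lang G \<subseteq> S (len G) kG"
      proof
        fix v assume v: "v \<in> lang G"
        have "x0 @ v @ y0 \<in> S l k" using ctx(2) v less.prems(2) l_def by auto
        hence "ones x0 + ones v + ones y0 = k" by (simp add: S_def)
        hence "ones v = kG" by (simp add: kG_def)
        thus "v \<in> S (len G) kG" using hom_len[OF hG v] by (simp add: S_def)
      qed
      have lGl: "len G < l" using Gt tl by simp
      have IH: "real (card (lang G)) * gf (len G) \<le> real (rnodes G) * 2 ^ len G"
        using less.hyps[OF _ hG LG] lGl l_def by simp
      define m where "m = l - len G"
      have cc: "card (Cov x) \<le> card (lang G) * (m choose (k - kG))"
        unfolding Cov_def xe m_def using cov_card[OF LG pl] by simp
      define C where "C = m choose (k - kG)"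
      have bb: "real C * sqrt (real m) \<le> 2^m" unfolding C_def by (rule binom_real_bound)
      have l4: "l \<le> 4 * len G" using tG unfolding t_def by linarith
      have l2: "l \<le> 2 * m" using Gt unfolding t_def m_def by linarith
      have gs: "gf l \<le> sqrt (real m) * gf (len G)"
        using gf_step[OF _ l4 l2] False by simp
      have "real (card (Cov x)) \<le> real (card (lang G) * C)" using cc unfolding C_def by (simp only: of_nat_le_iff)
      hence "real (card (Cov x)) * gf l \<le> real (card (lang G) * C) * gf l"
        using gf_pos[of l] by (intro mult_right_mono) auto
      also have "\<dots> \<le> real (card (lang G) * C) * (sqrt (real m) * gf (len G))"
        using gs by (intro mult_left_mono) auto
      also have "\<dots> = (real (card (lang G)) * gf (len G)) * (real C * sqrt (real m))"
        by (simp add: algebra_simps)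
      also have "\<dots> \<le> (real (rnodes G) * 2 ^ len G) * 2^m"
        by (rule mult_mono[OF IH bb]) auto
      also have "\<dots> = real (rnodes G) * 2^l"
        using lGl by (simp add: m_def power_add[symmetric] mult.assoc)
      finally show ?thesis using xe by simp
    qed
    have "card (lang r) \<le> card (\<Union>x\<in>set cs. Cov x)"
      using cover finC by (intro card_mono) auto
    also have "\<dots> \<le> (\<Sum>x\<leftarrow>cs. card (Cov x))" using finC by (rule card_UN_list)
    finally have "real (card (lang r)) \<le> (\<Sum>x\<leftarrow>cs. real (card (Cov x)))"
      by (simp add: sl_real)
    hence "real (card (lang r)) * gf l \<le> (\<Sum>x\<leftarrow>cs. real (card (Cov x))) * gf l"
      using gf_pos[of l] by (intro mult_right_mono) auto
    also have "\<dots> = (\<Sum>x\<leftarrow>cs. real (card (Cov x)) * gf l)" by (rule sl_mult[symmetric])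
    also have "\<dots> \<le> (\<Sum>x\<leftarrow>cs. real (rnodes (fst x)) * 2^l)" using trm by (rule sum_list_mono)
    also have "\<dots> = real (\<Sum>x\<leftarrow>cs. rnodes (fst x)) * 2^l" by (simp add: sl_mult sl_real)
    also have "\<dots> \<le> real (rnodes r) * 2^l"
      using ch_sum[of t r] unfolding cs_def by (intro mult_right_mono) auto
    finally show ?thesis by (simp add: l_def)
  qed
qed

lemma dyck_ones: "w \<in> dyck \<Longrightarrow> 2 * ones w = length w"
  by (induction rule: dyck.induct) auto

definition ht :: "bool list \<Rightarrow> int" where
  "ht w = int (length w) - 2 * int (ones w)"

lemma ht_simps[simp]: "ht [] = 0" "ht (u @ v) = ht u + ht v" "ht (False # w) = ht w + 1" "ht (True # w) = ht w - 1"
  by (auto simp: ht_def)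

definition pc :: "bool list \<Rightarrow> bool" where
  "pc w = ((\<forall>i \<le> length w. ht (take i w) \<ge> 0) \<and> ht w = 0)"

lemma dyck_insert: "w \<in> dyck \<Longrightarrow> w = a @ b \<Longrightarrow> a @ [False, True] @ b \<in> dyck"
proof (induction w arbitrary: a b rule: dyck.induct)
  case eps
  hence "a = []" "b = []" by auto
  thus ?case using dyck.wrap[OF dyck.eps] by simp
next
  case (conc v w)
  from conc.prems obtain us where "(v = a @ us \<and> b = us @ w) \<or> (v @ us = a \<and> w = us @ b)"
    by (auto simp: append_eq_append_conv2)
  thus ?case
  proof
    assume h: "v = a @ us \<and> b = us @ w"
    have "a @ [False, True] @ us \<in> dyck" using conc.IH(1) h by simp
    from dyck.conc[OF this conc.hyps(2)] show ?thesis using h by simp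
  next
    assume h: "v @ us = a \<and> w = us @ b"
    have "us @ [False, True] @ b \<in> dyck" using conc.IH(2) h by simp
    from dyck.conc[OF conc.hyps(1) this] show ?thesis using h by (metis append.assoc)
  qed
next
  case (wrap w)
  have ww: "[False] @ w @ [True] \<in> dyck" using dyck.wrap[OF wrap.hyps] .
  have ft: "[False, True] \<in> dyck" using dyck.wrap[OF dyck.eps] by simp
  show ?case
  proof (cases "a = []")
    case True
    hence "b = [False] @ w @ [True]" using wrap.prems by simp
    thus ?thesis using dyck.conc[OF ft ww] True by simp
  next
    case an: False
    show ?thesis
    proof (cases "b = []")
      case True
      hence "a = [False] @ w @ [True]" using wrap.prems by simp
      thus ?thesis using dyck.conc[OF ww ft] True by simp
    next
      case bn: False
      obtain a1 where a1: "a = False # a1" using an wrap.prems by (cases a) auto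
      obtain b1 c where b1: "b = b1 @ [c]" using bn by (cases b rule: rev_exhaust) auto
      have "w @ [True] = a1 @ b1 @ [c]" using wrap.prems a1 b1 by simp
      hence "w = a1 @ b1" "c = True" by auto
      hence "a1 @ [False, True] @ b1 \<in> dyck" using wrap.IH by simp
      from dyck.wrap[OF this] show ?thesis using a1 b1 \<open>c = True\<close> by simp
    qed
  qed
qed

lemma pc_dyck: "pc w \<Longrightarrow> w \<in> dyck"
proof (induction "length w" arbitrary: w rule: less_induct)
  case less
  show ?case
  proof (cases "w = []")
    case True thus ?thesis by (simp add: dyck.eps)
  next
    case False
    have pcw: "\<And>i. i \<le> length w \<Longrightarrow> ht (take i w) \<ge> 0" and hw: "ht w = 0"
      using less.prems by (auto simp: pc_def)
    have "True \<in> set w"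
    proof (rule ccontr)
      assume "True \<notin> set w"
      hence "ones w = 0" by (simp add: ones_def filter_empty_conv) (metis (full_types))
      hence "ht w = int (length w)" by (simp add: ht_def)
      thus False using hw False by simp
    qed
    define a where "a = takeWhile Not w"
    define d where "d = dropWhile Not w"
    have wad: "w = a @ d" by (simp add: a_def d_def)
    have dne: "d \<noteq> []" using \<open>True \<in> set w\<close> unfolding d_def dropWhile_eq_Nil_conv by force
    have hd: "hd d = True" using dne unfolding d_def by (metis hd_dropWhile)
    then obtain rest where drest: "d = True # rest" using dne by (cases d) auto
    have aF: "\<forall>x\<in>set a. x = False" by (auto simp: a_def dest: set_takeWhileD)
    have ane: "a \<noteq> []"
    proof
      assume "a = []"
      hence "take 1 w = [True]" using wad drest by simp
      hence "ht (take 1 w) = -1" by simp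
      thus False using pcw[of 1] False by (cases w) auto
    qed
    then obtain a0 where a0: "a = a0 @ [False]" using aF by (cases a rule: rev_exhaust) auto
    have wsplit: "w = a0 @ [False, True] @ rest" using wad a0 drest by simp
    define w' where "w' = a0 @ rest"
    have pcw': "pc w'"
      unfolding pc_def
    proof (intro conjI allI impI)
      fix i assume i: "i \<le> length w'"
      show "ht (take i w') \<ge> 0"
      proof (cases "i \<le> length a0")
        case True
        hence "take i w' = take i w" using wsplit w'_def by simp
        thus ?thesis using pcw[of i] i w'_def wsplit by simp
      next
        case False
        define j where "j = i - length a0"
        have "take i w' = a0 @ take j rest" using False by (simp add: w'_def j_def)
        moreover have "take (i + 2) w = a0 @ [False, True] @ take j rest"
        proof -
          have e: "Suc (Suc i) - length a0 = Suc (Suc j)" using False by (simp add: j_def)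
          show ?thesis using False wsplit by (simp add: e)
        qed
        moreover have "i + 2 \<le> length w" using i wsplit w'_def by simp
        ultimately show ?thesis using pcw[of "i+2"] by simp
      qed
    next
      show "ht w' = 0" using hw wsplit w'_def by simp
    qed
    have "length w' < length w" using wsplit w'_def by simp
    hence "w' \<in> dyck" using less.hyps pcw' by blast
    from dyck_insert[OF this, of a0 rest] show ?thesis using wsplit w'_def by simp
  qed
qed

lemma D_sub: "dyck_len (2*n) \<subseteq> S (2*n) n"
  using dyck_ones by (fastforce simp: dyck_len_def S_def)

lemma rot_exists:
  assumes w: "w \<in> S (2*n) n" and n: "n > 0"
  shows "\<exists>k<2*n. \<exists>d\<in>dyck_len (2*n). w = rotate k d"
proof -
  have lw: "length w = 2*n" and ow: "ones w = n" using w by (auto simp: S_def)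
  have hw: "ht w = 0" using lw ow by (simp add: ht_def)
  define H where "H = (\<lambda>i. ht (take i w)) ` {0..length w}"
  have fH: "finite H" and neH: "H \<noteq> {}" by (auto simp: H_def)
  define mn where "mn = Min H"
  have "mn \<in> H" unfolding mn_def using fH neH by (rule Min_in)
  then obtain i0 where i0: "i0 \<le> length w" "ht (take i0 w) = mn" unfolding H_def by auto
  have minp: "ht (take i0 w) \<le> ht (take i w)" if "i \<le> length w" for i
  proof -
    have "ht (take i w) \<in> H" using that by (auto simp: H_def)
    thus ?thesis using i0(2) Min_le[OF fH] unfolding mn_def by simp
  qed
  define x where "x = take i0 w"
  define y where "y = drop i0 w"
  define d where "d = y @ x"
  have wxy: "w = x @ y" by (simp add: x_def y_def)
  have lx: "length x = i0" using i0(1) by (simp add: x_def)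
  have pcd: "pc d" unfolding pc_def
  proof (intro conjI allI impI)
    fix j assume j: "j \<le> length d"
    show "ht (take j d) \<ge> 0"
    proof (cases "j \<le> length y")
      case True
      have "take (i0 + j) w = x @ take j y" by (simp add: x_def y_def take_add)
      hence "ht (take (i0+j) w) = ht x + ht (take j y)" by simp
      moreover have "i0 + j \<le> length w" using True i0 by (simp add: y_def)
      ultimately have "ht (take j y) \<ge> 0" using minp[of "i0+j"] x_def by simp
      thus ?thesis using True by (simp add: d_def)
    next
      case False
      define j' where "j' = j - length y"
      have tj: "take j d = y @ take j' x" using False by (simp add: d_def j'_def)
      have j'x: "j' \<le> i0" using j False lx by (simp add: d_def j'_def)
      have "take j' x = take j' w" using j'x by (simp add: x_def min_absorb1)
      hence "ht (take j d) = ht y + ht (take j' w)" using tj by simp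
      moreover have "ht y = - ht x" using hw wxy by simp
      moreover have "ht (take j' w) \<ge> ht x" using minp[of j'] j'x i0(1) x_def by simp
      ultimately show ?thesis by simp
    qed
  next
    show "ht d = 0" using hw wxy d_def by simp
  qed
  have ld: "length d = 2*n" using lw wxy d_def by simp
  have dD: "d \<in> dyck_len (2*n)" using pc_dyck[OF pcd] ld by (simp add: dyck_len_def)
  have "w = rotate (length y) d" by (simp add: d_def wxy rotate_append)
  also have "\<dots> = rotate (length y mod (2*n)) d" using ld by (metis rotate_conv_mod)
  finally show ?thesis using dD n by (intro exI[of _ "length y mod (2*n)"] conjI bexI) auto
qed

lemma dyck_count:
  assumes n: "n > 0"
  shows "(2*n) choose n \<le> 2*n * card (dyck_len (2*n))"
proof -
  let ?D = "dyck_len (2*n)"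
  have finD: "finite ?D" by (rule finite_subset[OF D_sub finite_S])
  have "S (2*n) n \<subseteq> (\<Union>k\<in>{..<2*n}. rotate k ` ?D)"
  proof
    fix w assume "w \<in> S (2*n) n"
    from rot_exists[OF this n] obtain k d where kd: "k < 2*n" "d \<in> ?D" "w = rotate k d" by blast
    have "w \<in> rotate k ` ?D" using kd(2,3) by (rule rev_image_eqI)
    thus "w \<in> (\<Union>k\<in>{..<2*n}. rotate k ` ?D)" using kd(1) by (intro UN_I[of k]) auto
  qed
  moreover have finU: "finite (\<Union>k\<in>{..<2*n}. rotate k ` ?D)"
    by (rule finite_UN_I) (simp_all add: finD)
  ultimately have "card (S (2*n) n) \<le> card (\<Union>k\<in>{..<2*n}. rotate k ` ?D)"
    by (intro card_mono)
  also have "\<dots> \<le> (\<Sum>k\<in>{..<2*n}. card (rotate k ` ?D))" by (rule card_UN_le) simp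
  also have "\<dots> \<le> (\<Sum>k\<in>{..<2*n}. card ?D)"
    by (rule sum_mono) (rule card_image_le[OF finD])
  also have "\<dots> = 2*n * card ?D" by simp
  finally show ?thesis by (simp add: card_S)
qed

fun wre :: "bool list \<Rightarrow> rexp" where
  "wre [] = Eps" | "wre (a # w) = Cat (Sym a) (wre w)"

lemma lang_wre: "lang (wre w) = {w}"
  by (induction w) auto

lemma exists_re: "finite L \<Longrightarrow> L \<noteq> {} \<Longrightarrow> \<exists>r. lang r = L"
proof (induction L rule: finite_ne_induct)
  case (singleton x) thus ?case using lang_wre by blast
next
  case (insert x F)
  then obtain r where "lang r = F" by blast
  hence "lang (Alt (wre x) r) = insert x F" by (simp add: lang_wre)
  thus ?case by blast
qed

lemma card_D_lower:
  assumes n: "n > 0"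
  shows "real (card (dyck_len (2*n))) \<ge> 4^n / (4 * real n ^ 2)"
proof -
  have a: "4^n / (2*real n) \<le> real ((2*n) choose n)" by (rule central_binomial_lower_bound[OF n])
  have "real ((2*n) choose n) \<le> real (2*n * card (dyck_len (2*n)))"
    using dyck_count[OF n] by (simp only: of_nat_le_iff)
  hence b: "real ((2*n) choose n) \<le> 2 * real n * real (card (dyck_len (2*n)))" by simp
  have "4^n / (4 * real n ^ 2) = (4^n / (2*real n)) / (2 * real n)" using n by (simp add: power2_eq_square field_simps)
  also have "\<dots> \<le> (2 * real n * real (card (dyck_len (2*n)))) / (2 * real n)"
    using a b n by (intro divide_right_mono) auto
  also have "\<dots> = real (card (dyck_len (2*n)))" using n by simp
  finally show ?thesis .
qed

lemma rpn_lower: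
  assumes n: "n > 0"
  shows "real (rpn (dyck_len (2*n))) \<ge> gf (2*n) / (4 * real n ^ 2)"
proof -
  let ?D = "dyck_len (2*n)"
  have finD: "finite ?D" by (rule finite_subset[OF D_sub finite_S])
  have cpos: "real (card ?D) > 0"
  proof -
    have "(0::real) < 4^n / (4 * real n ^ 2)" using n by simp
    thus ?thesis using card_D_lower[OF n] by linarith
  qed
  hence "?D \<noteq> {}" by auto
  then obtain r0 where "lang r0 = ?D" using exists_re[OF finD] by blast
  hence "\<exists>k. \<exists>r. lang r = ?D \<and> rnodes r = k" by blast
  from LeastI_ex[OF this] have "\<exists>r. lang r = ?D \<and> rnodes r = rpn ?D" unfolding rpn_def .
  then obtain r where r: "lang r = ?D" "rnodes r = rpn ?D" by blast
  have "\<forall>w\<in>lang r. length w = 2*n" using r(1) by (simp add: dyck_len_def)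
  hence hl: "hom r" "len r = 2*n" using all_len_hom by blast+
  have sub: "lang r \<subseteq> S (len r) n" using r(1) hl(2) D_sub by simp
  have M: "real (card (lang r)) * gf (len r) \<le> real (rnodes r) * 2 ^ len r" by (rule main[OF hl(1) sub])
  hence M2: "real (card ?D) * gf (2*n) \<le> real (rpn ?D) * 4^n"
    using r hl(2) by (simp add: power_mult)
  have "gf (2*n) / (4 * real n ^ 2) = (4^n / (4 * real n ^ 2)) * gf (2*n) / 4^n" by simp
  also have "\<dots> \<le> real (card ?D) * gf (2*n) / 4^n"
    using card_D_lower[OF n] gf_pos[of "2*n"] by (intro divide_right_mono mult_right_mono) auto
  also have "\<dots> \<le> real (rpn ?D) * 4^n / 4^n" using M2 by (intro divide_right_mono) auto
  also have "\<dots> = real (rpn ?D)" by simp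
  finally show ?thesis .
qed

lemma final_ineq:
  fixes n :: nat
  assumes y: "ln (real n) \<ge> 100"
  shows "gf (2*n) / (4 * real n ^ 2) \<ge> real n powr (1/32 * ln (real n))"
proof -
  define y where "y = ln (real n)"
  have npos: "real n > 0"
  proof (rule ccontr)
    assume "\<not> real n > 0"
    hence "n = 0" by simp
    thus False using y by simp
  qed
  have y100: "y \<ge> 100" using y by (simp add: y_def)
  have ln2: "ln (2::real) < 1" "ln (2::real) > 0" using ln_2_less_1 by auto
  have ln8: "ln (8::real) = 3 * ln 2" using ln_realpow[of 2 3] by simp
  define K where "K = (ln (8::real))^2 / 16"
  have K1: "K \<le> 1"
  proof -
    have "ln (8::real) \<le> 3" using ln8 ln2 by simp
    moreover have "ln (8::real) \<ge> 0" by simp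
    ultimately have "(ln (8::real))^2 \<le> 3^2" by (intro power_mono) auto
    thus ?thesis by (simp add: K_def)
  qed
  have ln4: "ln (4::real) \<le> 2" using ln_realpow[of 2 2] ln2 by simp
  have "ln (real (2*n)) = ln 2 + y" using npos by (simp add: y_def ln_mult)
  hence l2n: "ln (real (2*n)) \<ge> y" using ln2 by simp
  have "y^2 \<le> (ln (real (2*n)))^2" using l2n y100 by (intro power_mono) auto
  hence g1: "exp (y^2/16 - K) \<le> gf (2*n)" by (simp add: gf_def K_def)
  have e2: "exp (2 * y) = real n * real n"
  proof -
    have "exp (2 * y) = exp y * exp y" by (metis exp_add mult_2)
    also have "\<dots> = real n * real n" using npos by (simp add: y_def)
    finally show ?thesis .
  qed
  have sq: "4 * real n ^ 2 = exp (ln 4 + 2 * y)"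
    by (simp add: exp_add e2 power2_eq_square)
  have key: "ln 4 + 2 * y + y^2/32 \<le> y^2/16 - K"
  proof -
    have "y * y \<ge> 100 * y" using y100 by (intro mult_right_mono) auto
    hence "y^2 \<ge> 100 * y" by (simp add: power2_eq_square)
    thus ?thesis using K1 ln4 y100 by linarith
  qed
  have A: "exp (y^2/32) * exp (ln 4 + 2 * y) \<le> exp (y^2/16 - K)"
    using key by (simp add: exp_add[symmetric])
  have "real n powr (1/32 * ln (real n)) = exp (y^2/32)"
    using npos by (simp add: powr_def y_def power2_eq_square)
  also have "\<dots> = exp (y^2/32) * exp (ln 4 + 2 * y) / (4 * real n ^ 2)" using sq by simp
  also have "\<dots> \<le> exp (y^2/16 - K) / (4 * real n ^ 2)" using A npos by (intro divide_right_mono) auto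
  also have "\<dots> \<le> gf (2*n) / (4 * real n ^ 2)" using g1 npos by (intro divide_right_mono) auto
  finally show ?thesis .
qed

theorem corollary5p4:
  shows "\<exists>c>0. \<exists>N. \<forall>n\<ge>N.
           real (rpn (dyck_len (2 * n))) \<ge> real n powr (c * ln (real n))"
proof (intro exI[of _ "1/32"] conjI exI[of _ "nat \<lceil>exp 100\<rceil>"] allI impI)
  show "(0::real) < 1/32" by simp
  fix n :: nat assume nN: "nat \<lceil>exp (100::real)\<rceil> \<le> n"
  have "exp (100::real) \<le> real n" using nN by linarith
  hence y: "ln (real n) \<ge> 100" by (metis exp_gt_zero exp_le_cancel_iff exp_ln less_le_trans)
  have n: "n > 0" using \<open>exp 100 \<le> real n\<close> by (metis exp_gt_zero of_nat_0_less_iff less_le_trans)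
  show "real (rpn (dyck_len (2 * n))) \<ge> real n powr (1/32 * ln (real n))"
    using rpn_lower[OF n] final_ineq[OF y] by linarith
qed

end
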